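(* Let $G=(V,E)$ be a strongly connected digraph, $s\in V$, and let $v,w$ be two distinct vertices of $G$. Then $v \leftrightarrow_{\mathrm{2e}} w$ in $G$ if and only if there is a subtree root $r$ such that $v$ and $w$ are both ordinary vertices of the auxiliary graph $G_r$ (i.e., $v,w\in T(r)$) and $v \leftrightarrow_{\mathrm{2e}} w$ in $G_r$.
   Context: For vertices $v,w$ of a digraph $H$, $v \leftrightarrow_{\mathrm{2e}} w$ in $H$ means $v=w$, or there are two edge-disjoint directed paths from $v$ to $w$ and two edge-disjoint directed paths from $w$ to $v$ in $H$. For a digraph $G=(V,E)$ and $s\in V$ with every vertex reachable from $s$: $u$ dominates $w$ in the flow graph $G(s)$ if every path from $s$ to $w$ contains $u$; the dominator tree $D(s)$ is the rooted tree on $V$ with root $s$ in which $u$ is an ancestor of $w$ iff $u$ dominates $w$; $d(w)$ is the parent of $w\neq s$. An edge $(u,w)$ is a bridge of $G(s)$ if every path from $s$ to $w$ contains it (then $u=d(w)$). A vertex $w\neq s$ is marked if $(d(w),w)$ is a bridge. Deleting from $D(s)$ all edges $(d(w),w)$ with $w$ marked decomposes $D(s)$ into subtrees rooted at $s$ or at marked vertices; $T(v)$ is the subtree containing $v$. A vertex $x\in T(r)$ is a boundary vertex of $T(r)$ if $x$ has a marked child in $D(s)$. Auxiliary graph: for a subtree root $r$ that is not a leaf of $D(s)$, $G_r=(V_r,E_r)$ has ordinary vertices $V_r^o$ = the vertices of $T(r)$ and auxiliary vertices $V_r^a$ consisting of: a copy of each marked child $z$ of each boundary vertex $x$ of $T(r)$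 (with the edge $(x,z)$ in $E_r$), and, if $r\neq s$, a copy of $d(r)$ (with the edge $(d(r),r)$ in $E_r$). $E_r$ further contains all edges of $E$ with both endpoints in $T(r)$, plus the following shortcut edges, for each $(u,v)\in E$: (a) if $u\in T(r)$ and $v$ is not a descendant of $r$ in $D(s)$, the edge $(u,d(r))$; (b) if $v\in T(r)$ and $u$ is a descendant in $D(s)$ of a marked child $z$ of a boundary vertex of $T(r)$, the edge $(z,v)$; (c) if $u$ is a descendant in $D(s)$ of a marked child $z$ of a boundary vertex of $T(r)$ and $v$ is not a descendant of $r$ in $D(s)$, the edge $(z,d(r))$. Parallel duplicate edges are not kept. *)

theory Defs
  imports Main
begin

definition path_edges :: "'a list \<Rightarrow> ('a \<times> 'a) set" where
  "path_edges p = set (zip p (tl p))"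

definition dpath :: "('a \<times> 'a) set \<Rightarrow> 'a list \<Rightarrow> 'a \<Rightarrow> 'a \<Rightarrow> bool" where
  "dpath E p x y \<longleftrightarrow> p \<noteq> [] \<and> hd p = x \<and> last p = y \<and> distinct p
      \<and> path_edges p \<subseteq> E"

definition strongly_connected :: "'a set \<Rightarrow> ('a \<times> 'a) set \<Rightarrow> bool" where
  "strongly_connected V E \<longleftrightarrow> (\<forall>x\<in>V. \<forall>y\<in>V. \<exists>p. dpath E p x y)"

definition two_edge_paths :: "('a \<times> 'a) set \<Rightarrow> 'a \<Rightarrow> 'a \<Rightarrow> bool" where
  "two_edge_paths E x y \<longleftrightarrow>
     (\<exists>p q. dpath E p x y \<and> dpath E q x y \<and> path_edges p \<inter> path_edges q = {})"

definition two_edge_equiv :: "('a \<times> 'a) set \<Rightarrow> 'a \<Rightarrow> 'a \<Rightarrow> bool" where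
  "two_edge_equiv E x y \<longleftrightarrow> x = y \<or> (two_edge_paths E x y \<and> two_edge_paths E y x)"

definition dominates :: "('a \<times> 'a) set \<Rightarrow> 'a \<Rightarrow> 'a \<Rightarrow> 'a \<Rightarrow> bool" where
  "dominates E s u w \<longleftrightarrow> (\<forall>p. dpath E p s w \<longrightarrow> u \<in> set p)"

definition idom :: "('a \<times> 'a) set \<Rightarrow> 'a \<Rightarrow> 'a \<Rightarrow> 'a" where
  "idom E s w = (THE u. u \<noteq> w \<and> dominates E s u w \<and>
      (\<forall>u'. u' \<noteq> w \<and> dominates E s u' w \<longrightarrow> dominates E s u' u))"

definition is_bridge :: "('a \<times> 'a) set \<Rightarrow> 'a \<Rightarrow> 'a \<Rightarrow> 'a \<Rightarrow> bool" where
  "is_bridge E s u w \<longleftrightarrow> (u, w) \<in> E \<and> (\<forall>p. dpath E p s w \<longrightarrow> (u, w) \<in> path_edges p)"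

definition marked :: "'a set \<Rightarrow> ('a \<times> 'a) set \<Rightarrow> 'a \<Rightarrow> 'a \<Rightarrow> bool" where
  "marked V E s w \<longleftrightarrow> w \<in> V \<and> w \<noteq> s \<and> is_bridge E s (idom E s w) w"

definition subtree_root :: "'a set \<Rightarrow> ('a \<times> 'a) set \<Rightarrow> 'a \<Rightarrow> 'a \<Rightarrow> bool" where
  "subtree_root V E s r \<longleftrightarrow> r = s \<or> marked V E s r"

definition subtree :: "'a set \<Rightarrow> ('a \<times> 'a) set \<Rightarrow> 'a \<Rightarrow> 'a \<Rightarrow> 'a set" where
  "subtree V E s r = {v \<in> V. dominates E s r v \<and>
      (\<forall>x. x \<noteq> r \<and> dominates E s r x \<and> dominates E s x v \<longrightarrow> \<not> marked V E s x)}"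

definition boundary_children :: "'a set \<Rightarrow> ('a \<times> 'a) set \<Rightarrow> 'a \<Rightarrow> 'a \<Rightarrow> 'a set" where
  "boundary_children V E s r = {z. marked V E s z \<and> idom E s z \<in> subtree V E s r}"

text \<open>Auxiliary graph G_r. Auxiliary vertices are represented by the original
vertices they are copies of (they are distinct from T(r) and from each other).\<close>
definition aux_vertices :: "'a set \<Rightarrow> ('a \<times> 'a) set \<Rightarrow> 'a \<Rightarrow> 'a \<Rightarrow> 'a set" where
  "aux_vertices V E s r = subtree V E s r \<union> boundary_children V E s r
      \<union> (if r \<noteq> s then {idom E s r} else {})"

definition aux_edges :: "'a set \<Rightarrow> ('a \<times> 'a) set \<Rightarrow> 'a \<Rightarrow> 'a \<Rightarrow> ('a \<times> 'a) set" where
  "aux_edges V E s r =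
     {(x, z). z \<in> boundary_children V E s r \<and> x = idom E s z}
   \<union> (if r \<noteq> s then {(idom E s r, r)} else {})
   \<union> {(u, v). (u, v) \<in> E \<and> u \<in> subtree V E s r \<and> v \<in> subtree V E s r}
   \<union> {(u, d). \<exists>v. (u, v) \<in> E \<and> u \<in> subtree V E s r \<and> \<not> dominates E s r v
                 \<and> d = idom E s r}
   \<union> {(z, v). \<exists>u. (u, v) \<in> E \<and> v \<in> subtree V E s r
                 \<and> z \<in> boundary_children V E s r \<and> dominates E s z u}
   \<union> {(z, d). \<exists>u v. (u, v) \<in> E \<and> z \<in> boundary_children V E s r
                 \<and> dominates E s z u \<and> \<not> dominates E s r v \<and> d = idom E s r}"

end

theory Submission
  imports Defs
begin


lemma pe_Nil[simp]: "path_edges [] = {}" by (simp add: path_edges_def)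
lemma pe_single[simp]: "path_edges [x] = {}" by (simp add: path_edges_def)
lemma pe_Cons2[simp]: "path_edges (x#y#xs) = insert (x,y) (path_edges (y#xs))"
  by (simp add: path_edges_def)

lemma pe_append:
  "path_edges (xs @ ys) = path_edges xs \<union> path_edges ys \<union>
     (if xs \<noteq> [] \<and> ys \<noteq> [] then {(last xs, hd ys)} else {})"
proof (induction xs)
  case Nil then show ?case by simp
next
  case (Cons x xs)
  show ?case
  proof (cases xs)
    case Nil then show ?thesis by (cases ys) auto
  next
    case (Cons y zs) then show ?thesis using Cons.IH by auto
  qed
qed

lemma pe_set: "(a,b) \<in> path_edges p \<Longrightarrow> a \<in> set p \<and> b \<in> set (tl p)"
  unfolding path_edges_def by (auto dest: set_zip_leftD set_zip_rightD)

lemma tl_subset: "set (tl p) \<subseteq> set p" by (cases p) auto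

lemma pe_split: "(a,b) \<in> path_edges p \<longleftrightarrow> (\<exists>p1 p2. p = p1 @ a # b # p2)"
proof (induction p)
  case Nil then show ?case by simp
next
  case (Cons x p)
  show ?case
  proof (cases p)
    case Nil then show ?thesis by (auto simp: Cons_eq_append_conv)
  next
    case (Cons y q)
    show ?thesis
    proof
      assume "(a,b) \<in> path_edges (x#p)"
      then have "(a,b) = (x,y) \<or> (a,b) \<in> path_edges p" using Cons by auto
      then show "\<exists>p1 p2. x # p = p1 @ a # b # p2"
      proof
        assume "(a,b) = (x,y)" then show ?thesis using Cons by (intro exI[of _ "[]"] exI[of _ q]) auto
      next
        assume "(a,b) \<in> path_edges p"
        then obtain p1 p2 where "p = p1 @ a # b # p2" using Cons.IH by auto
        then show ?thesis by (intro exI[of _ "x#p1"] exI[of _ p2]) auto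
      qed
    next
      assume "\<exists>p1 p2. x # p = p1 @ a # b # p2"
      then obtain p1 p2 where h: "x # p = p1 @ a # b # p2" by auto
      show "(a,b) \<in> path_edges (x#p)"
      proof (cases p1)
        case Nil then show ?thesis using h Cons by auto
      next
        case (Cons x' p1')
        then have "p = p1' @ a # b # p2" using h by auto
        then have "(a,b) \<in> path_edges p" using Cons.IH by auto
        then show ?thesis using \<open>p = y # q\<close> by auto
      qed
    qed
  qed
qed

lemma pe_distinct: "distinct p \<Longrightarrow> (a,b) \<in> path_edges p \<Longrightarrow> a \<noteq> b"
  by (auto simp: pe_split)

lemma pe_glue: "xs \<noteq> [] \<Longrightarrow> L \<noteq> [] \<Longrightarrow> last xs = hd L \<Longrightarrow>
   path_edges (xs @ tl L) = path_edges xs \<union> path_edges L"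
  by (cases L; cases "tl L") (auto simp: pe_append)

lemma set_hd_snd: "p \<noteq> [] \<Longrightarrow> set p \<subseteq> insert (hd p) (snd ` path_edges p)"
proof (induction p)
  case (Cons x p)
  show ?case
  proof (cases p)
    case (Cons y q)
    then have "y \<in> snd ` path_edges (x#p)" by force
    then show ?thesis using Cons.IH Cons by auto
  qed simp
qed simp

lemma set_last_fst: "p \<noteq> [] \<Longrightarrow> set p \<subseteq> insert (last p) (fst ` path_edges p)"
proof (induction p)
  case (Cons x p)
  show ?case
  proof (cases p)
    case (Cons y q)
    then have "x \<in> fst ` path_edges (x#p)" by force
    then show ?thesis using Cons.IH Cons by auto
  qed simp
qed simp

definition walk :: "('a \<times> 'a) set \<Rightarrow> 'a list \<Rightarrow> 'a \<Rightarrow> 'a \<Rightarrow> bool" where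
  "walk E p x y \<longleftrightarrow> p \<noteq> [] \<and> hd p = x \<and> last p = y \<and> path_edges p \<subseteq> E"

lemma shorten: "walk E p x y \<Longrightarrow>
  \<exists>q. dpath E q x y \<and> set q \<subseteq> set p \<and> path_edges q \<subseteq> path_edges p"
proof (induction "length p" arbitrary: p rule: less_induct)
  case less
  show ?case
  proof (cases "distinct p")
    case True then show ?thesis using less.prems by (auto simp: walk_def dpath_def)
  next
    case False
    then obtain xs y ys zs where p: "p = xs @ [y] @ ys @ [y] @ zs"
      using not_distinct_decomp by blast
    define p' where "p' = xs @ [y] @ zs"
    have "length p' < length p" using p p'_def by simp
    moreover have pe: "path_edges p' \<subseteq> path_edges p"
    proof -
      have "p' = (xs @ [y]) @ tl (y # zs)" using p'_def by simp
      then have 1: "path_edges p' = path_edges (xs @ [y]) \<union> path_edges (y # zs)"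
        using pe_glue[of "xs @ [y]" "y # zs"] by simp
      have "p = (xs @ [y]) @ (ys @ (y # zs))" using p by simp
      then have "path_edges (xs @ [y]) \<subseteq> path_edges p" "path_edges (ys @ (y # zs)) \<subseteq> path_edges p"
        by (metis Un_upper1 Un_upper2 pe_append sup.coboundedI1)+
      moreover have "path_edges (y # zs) \<subseteq> path_edges (ys @ (y # zs))"
        by (metis Un_upper1 Un_upper2 pe_append sup.coboundedI1)
      ultimately show ?thesis using 1 by auto
    qed
    moreover have "walk E p' x y'" if "walk E p x y'" for y'
    proof -
      have "hd p' = hd p" "last p' = last p" "p' \<noteq> []" using p unfolding p'_def
        by (cases xs; cases zs; simp)+
      then show ?thesis using that pe unfolding walk_def by auto
    qed
    moreover have "set p' \<subseteq> set p" using p p'_def by auto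
    ultimately show ?thesis using less by blast
  qed
qed

lemma dpath_walk: "dpath E p x y \<Longrightarrow> walk E p x y"
  by (simp add: dpath_def walk_def)

lemma cross1: "p \<noteq> [] \<Longrightarrow> \<not> P (hd p) \<Longrightarrow> y \<in> set p \<Longrightarrow> P y \<Longrightarrow>
   \<exists>a b. (a,b) \<in> path_edges p \<and> \<not> P a \<and> P b"
proof (induction p)
  case (Cons x p)
  show ?case
  proof (cases p)
    case Nil then show ?thesis using Cons by auto
  next
    case (Cons x' p')
    show ?thesis
    proof (cases "P x'")
      case True then show ?thesis using Cons \<open>\<not> P (hd (x # p))\<close> by auto
    next
      case False
      then have "y \<in> set p" using Cons.prems by auto
      then show ?thesis using Cons.IH False \<open>P y\<close> \<open>p = x' # p'\<close> by auto
    qed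
  qed
qed simp

lemma cross2: "p \<noteq> [] \<Longrightarrow> P (last p) \<Longrightarrow> y \<in> set p \<Longrightarrow> \<not> P y \<Longrightarrow>
   \<exists>a b. (a,b) \<in> path_edges p \<and> \<not> P a \<and> P b"
proof -
  assume a: "p \<noteq> []" "P (last p)" "y \<in> set p" "\<not> P y"
  then obtain p1 p2 where p: "p = p1 @ y # p2" by (meson split_list)
  have "last (y # p2) \<in> set (y#p2)" by simp
  moreover have "P (last (y#p2))" using a p by (cases p2) auto
  ultimately obtain c d where "(c,d) \<in> path_edges (y#p2)" "\<not> P c" "P d"
    using cross1[of "y#p2" P] a by fastforce
  moreover have "path_edges (y#p2) \<subseteq> path_edges p" using p by (auto simp: pe_append)
  ultimately show ?thesis by blast
qed



locale sg =
  fixes V :: "'a set" and E :: "('a \<times> 'a) set" and s :: 'a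
  assumes fin: "finite V" and EV: "E \<subseteq> V \<times> V" and sc: "strongly_connected V E"
    and sV: "s \<in> V"
begin

abbreviation D where "D \<equiv> dominates E s"

lemma walk_V: "walk E p x y \<Longrightarrow> x \<in> V \<Longrightarrow> set p \<subseteq> V"
proof -
  assume w: "walk E p x y" "x \<in> V"
  have "set p \<subseteq> insert (hd p) (snd ` path_edges p)" using w set_hd_snd walk_def by metis
  moreover have "snd ` path_edges p \<subseteq> V" using w EV unfolding walk_def by auto
  ultimately show ?thesis using w unfolding walk_def by auto
qed

lemma dpath_V: "dpath E p x y \<Longrightarrow> x \<in> V \<Longrightarrow> set p \<subseteq> V"
  using walk_V dpath_walk by metis

lemma reach: "x \<in> V \<Longrightarrow> y \<in> V \<Longrightarrow> \<exists>p. dpath E p x y"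
  using sc unfolding strongly_connected_def by auto

lemma dom_refl: "D a a"
  unfolding dominates_def dpath_def by auto

lemma dom_s: "D s a"
  unfolding dominates_def dpath_def by (auto intro: hd_in_set)

lemma not_domE: "\<not> D u w \<Longrightarrow> \<exists>p. dpath E p s w \<and> u \<notin> set p"
  unfolding dominates_def by auto

lemma walk_avoid: "walk E p s w \<Longrightarrow> u \<notin> set p \<Longrightarrow> \<not> D u w"
proof -
  assume "walk E p s w" "u \<notin> set p"
  moreover obtain q where "dpath E q s w" "set q \<subseteq> set p" using shorten \<open>walk E p s w\<close> by metis
  ultimately show ?thesis unfolding dominates_def by auto
qed

lemma dom_walk: "D u w \<Longrightarrow> walk E p s w \<Longrightarrow> u \<in> set p"
  using walk_avoid by blast

lemma pe_prefix: "path_edges (xs @ [u]) \<subseteq> path_edges (xs @ u # ys)"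
  by (auto simp: pe_append)
lemma pe_suffix: "path_edges (u # ys) \<subseteq> path_edges (xs @ u # ys)"
  by (auto simp: pe_append)

lemma prefix_dpath: "dpath E p x y \<Longrightarrow> p = p1 @ u # p2 \<Longrightarrow> dpath E (p1 @ [u]) x u"
  using pe_prefix[of p1 u p2] unfolding dpath_def by (cases p1) auto

lemma dom_V: "D a b \<Longrightarrow> b \<in> V \<Longrightarrow> a \<in> V"
proof -
  assume "D a b" "b \<in> V"
  then obtain p where "dpath E p s b" using reach[OF sV, of b] by auto
  then show ?thesis using \<open>D a b\<close> dpath_V[OF _ sV] unfolding dominates_def by auto
qed

lemma dom_trans: "D a b \<Longrightarrow> D b c \<Longrightarrow> D a c"
proof (unfold dominates_def, intro allI impI)
  fix p assume ab: "\<forall>p. dpath E p s b \<longrightarrow> a \<in> set p" and bc: "\<forall>p. dpath E p s c \<longrightarrow> b \<in> set p"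
    and p: "dpath E p s c"
  then obtain p1 p2 where "p = p1 @ b # p2" by (meson split_list)
  then have "dpath E (p1 @ [b]) s b" using prefix_dpath p by blast
  then have "a \<in> set (p1 @ [b])" using ab by blast
  then show "a \<in> set p" using \<open>p = p1 @ b # p2\<close> by auto
qed

lemma dom_antisym: "D a b \<Longrightarrow> D b a \<Longrightarrow> b \<in> V \<Longrightarrow> a = b"
proof -
  assume ab: "D a b" and ba: "D b a" and bV: "b \<in> V"
  obtain p where p: "dpath E p s b" using reach sV bV by blast
  then have "a \<in> set p" using ab unfolding dominates_def by blast
  then obtain p1 p2 where pp: "p = p1 @ a # p2" by (meson split_list)
  then have "dpath E (p1 @ [a]) s a" using prefix_dpath p by blast
  then have "b \<in> set (p1 @ [a])" using ba unfolding dominates_def by blast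
  moreover have "b \<in> set (a # p2)" using p pp unfolding dpath_def
    by (metis last_ConsL last_ConsR last_appendR last_in_set list.distinct(1))
  moreover have "distinct p" using p unfolding dpath_def by auto
  ultimately show "a = b" using pp by auto
qed

lemma dom_before:
  assumes p: "dpath E p s y" "p = p1 @ b # p2" "a \<in> set p1" "D a y"
  shows "D a b"
proof (rule ccontr)
  assume "\<not> D a b"
  then obtain q where q: "dpath E q s b" "a \<notin> set q" using not_domE by blast
  have "walk E (q @ tl (b # p2)) s y"
  proof -
    have "path_edges (q @ tl (b # p2)) = path_edges q \<union> path_edges (b # p2)"
      using q by (intro pe_glue) (auto simp: dpath_def)
    moreover have "path_edges (b # p2) \<subseteq> path_edges p"
      using p(2) pe_append[of p1 "b#p2"] by auto
    moreover have "last (q @ tl (b # p2)) = y"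
      using p q unfolding dpath_def by (cases p2) auto
    ultimately show ?thesis using p q unfolding dpath_def walk_def by auto
  qed
  moreover have "a \<notin> set (q @ tl (b # p2))" using p q unfolding dpath_def by auto
  ultimately show False using walk_avoid p(4) by blast
qed

lemma dom_chain: "D a y \<Longrightarrow> D b y \<Longrightarrow> y \<in> V \<Longrightarrow> D a b \<or> D b a"
proof -
  assume ay: "D a y" and bY: "D b y" and yV: "y \<in> V"
  obtain p where p: "dpath E p s y" using reach sV yV by blast
  then have "b \<in> set p" "a \<in> set p" using ay bY unfolding dominates_def by blast+
  then obtain p1 p2 where pp: "p = p1 @ b # p2" by (meson split_list)
  show ?thesis
  proof (cases "a \<in> set p1")
    case True then show ?thesis using dom_before p pp ay by blast
  next
    case False
    then have "a = b \<or> a \<in> set p2" using \<open>a \<in> set p\<close> pp by auto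
    then show ?thesis
    proof
      assume "a = b" then show ?thesis using dom_refl by auto
    next
      assume "a \<in> set p2"
      then obtain r1 r2 where "p2 = r1 @ a # r2" by (meson split_list)
      then have "p = (p1 @ b # r1) @ a # r2" using pp by simp
      then show ?thesis using dom_before[OF p _ _ bY, of "p1 @ b # r1" a r2] by auto
    qed
  qed
qed

lemma L5: assumes h0: "(a,b) \<in> E" "D z b" "\<not> D z a" shows "b = z"
proof (rule ccontr)
  assume "b \<noteq> z"
  note h = h0 this
  obtain q where q: "dpath E q s a" "z \<notin> set q" using not_domE h by blast
  have "walk E (q @ [b]) s b" using q h unfolding dpath_def walk_def by (auto simp: pe_append)
  moreover have "z \<notin> set (q @ [b])" using q h by auto
  ultimately show False using walk_avoid h by blast
qed

lemma L6: "marked V E s z \<Longrightarrow> (a,z) \<in> E \<Longrightarrow> \<not> D z a \<Longrightarrow> a = idom E s z"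
proof -
  assume h: "marked V E s z" "(a,z) \<in> E" "\<not> D z a"
  obtain q where q: "dpath E q s a" "z \<notin> set q" using not_domE h by blast
  have "dpath E (q @ [z]) s z" using q h unfolding dpath_def by (auto simp: pe_append)
  then have "(idom E s z, z) \<in> path_edges (q @ [z])"
    using h unfolding marked_def is_bridge_def by blast
  then have "(idom E s z, z) \<in> path_edges q \<or> (idom E s z, z) = (a, z)"
    using q unfolding dpath_def by (auto simp: pe_append)
  then show ?thesis using q pe_set tl_subset by fastforce
qed

lemma mk_basic: "marked V E s z \<Longrightarrow> z \<in> V \<and> z \<noteq> s \<and> (idom E s z, z) \<in> E \<and> idom E s z \<in> V"
  using EV unfolding marked_def is_bridge_def by auto

lemma mk_path: "marked V E s z \<Longrightarrow> dpath E p s z \<Longrightarrow> (idom E s z, z) \<in> path_edges p"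
  unfolding marked_def is_bridge_def by auto

lemma L7c: "marked V E s z \<Longrightarrow> D (idom E s z) z"
  unfolding dominates_def using mk_path pe_set by fastforce

lemma L7b: "marked V E s z \<Longrightarrow> \<not> D z (idom E s z)"
proof -
  assume m: "marked V E s z"
  obtain p where p: "dpath E p s z" using reach sV mk_basic m by blast
  then obtain p1 p2 where pp: "p = p1 @ idom E s z # z # p2"
    using mk_path m pe_split by metis
  have dp: "distinct p" "last p = z" using p unfolding dpath_def by auto
  have "dpath E (p1 @ [idom E s z]) s (idom E s z)" using prefix_dpath p pp by blast
  moreover have "z \<notin> set (p1 @ [idom E s z])" using dp pp by auto
  ultimately show ?thesis unfolding dominates_def by blast
qed

lemma L7d: "marked V E s z \<Longrightarrow> D x z \<Longrightarrow> x \<noteq> z \<Longrightarrow> D x (idom E s z)"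
proof (unfold dominates_def, intro allI impI)
  fix q assume m: "marked V E s z" and xz: "\<forall>p. dpath E p s z \<longrightarrow> x \<in> set p" and ne: "x \<noteq> z"
    and q: "dpath E q s (idom E s z)"
  show "x \<in> set q"
  proof (cases "z \<in> set q")
    case True
    then obtain q1 q2 where qq: "q = q1 @ z # q2" by (meson split_list)
    then have "dpath E (q1 @ [z]) s z" using prefix_dpath q by blast
    then have "(idom E s z, z) \<in> path_edges (q1 @ [z])" using mk_path m by blast
    moreover have "distinct (q1 @ [z])" using q qq unfolding dpath_def by auto
    ultimately have "idom E s z \<in> set q1"
      using pe_set pe_distinct by fastforce
    moreover have "idom E s z \<in> set (z # q2)" using q qq unfolding dpath_def
      by (metis last_appendR last_in_set list.distinct(1))
    ultimately show ?thesis using q qq unfolding dpath_def by auto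
  next
    case False
    then have "dpath E (q @ [z]) s z" using q mk_basic[OF m] unfolding dpath_def by (auto simp: pe_append)
    then show ?thesis using xz ne by auto
  qed
qed

lemma sep: "marked V E s m \<Longrightarrow> D m y \<Longrightarrow> \<not> D m x \<Longrightarrow> dpath E p x y \<Longrightarrow>
  (idom E s m, m) \<in> path_edges p"
proof -
  assume h: "marked V E s m" "D m y" "\<not> D m x" "dpath E p x y"
  then obtain a b where ab: "(a,b) \<in> path_edges p" "\<not> D m a" "D m b"
    using cross1[of p "D m" y] unfolding dpath_def by auto
  then have "(a,b) \<in> E" using h unfolding dpath_def by auto
  then have "b = m" using L5 ab h by auto
  then have "a = idom E s m" using L6 ab h \<open>(a,b) \<in> E\<close> by auto
  then show ?thesis using ab \<open>b = m\<close> by simp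
qed

end


context sg begin

lemma root_exists:
  assumes vV: "v \<in> V"
  shows "\<exists>r. subtree_root V E s r \<and> v \<in> subtree V E s r"
proof -
  define C where "C = {x. (x = s \<or> marked V E s x) \<and> D x v}"
  define m where "m x = card V - card {y. D y x}" for x
  have "s \<in> C" using dom_s C_def by auto
  then obtain r where r: "r \<in> C" and rmin: "\<And>y. y \<in> C \<Longrightarrow> m r \<le> m y"
    using ex_has_least_nat[of "\<lambda>x. x \<in> C" s m] by blast
  have rV: "r \<in> V" using r C_def sV mk_basic by auto
  have "v \<in> subtree V E s r"
    unfolding subtree_def
  proof (intro CollectI conjI allI impI vV)
    show "D r v" using r C_def by auto
    fix x assume x: "x \<noteq> r \<and> D r x \<and> D x v"
    show "\<not> marked V E s x"
    proof
      assume mx: "marked V E s x"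
      then have xC: "x \<in> C" using x C_def by auto
      have xV: "x \<in> V" using mk_basic mx by auto
      have sub1: "{y. D y x} \<subseteq> V" using dom_V[of _ x] xV by blast
      have "{y. D y r} \<subset> {y. D y x}"
      proof
        show "{y. D y r} \<subseteq> {y. D y x}" using dom_trans[of _ r x] x by blast
        have "x \<notin> {y. D y r}"
        proof
          assume "x \<in> {y. D y r}"
          then have "D x r" by simp
          then have "r = x" using dom_antisym[of r x] x xV by blast
          then show False using x by simp
        qed
        then show "{y. D y r} \<noteq> {y. D y x}" using dom_refl by auto
      qed
      then have "card {y. D y r} < card {y. D y x}"
        using psubset_card_mono[OF finite_subset[OF sub1 fin]] by blast
      moreover have "card {y. D y x} \<le> card V" using card_mono[OF fin sub1] .
      ultimately have "m x < m r" unfolding m_def by linarith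
      then show False using rmin xC by force
    qed
  qed
  moreover have "subtree_root V E s r" using r unfolding C_def subtree_root_def by blast
  ultimately show ?thesis by blast
qed

end

locale sgr = sg + fixes r assumes root: "subtree_root V E s r"
begin

abbreviation T where "T \<equiv> subtree V E s r"
abbreviation BC where "BC \<equiv> boundary_children V E s r"

definition pi where
  "pi a = (if a \<in> T then a else if D r a then (SOME z. z \<in> BC \<and> D z a) else idom E s r)"

lemma T_mem: "v \<in> T \<longleftrightarrow> v \<in> V \<and> D r v \<and> (\<forall>x. x \<noteq> r \<and> D r x \<and> D x v \<longrightarrow> \<not> marked V E s x)"
  unfolding subtree_def by (simp only: mem_Collect_eq)

lemma T_not: "x \<noteq> r \<Longrightarrow> D r x \<Longrightarrow> D x v \<Longrightarrow> marked V E s x \<Longrightarrow> v \<notin> T"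
  unfolding T_mem by blast

lemma BC_mem: "z \<in> BC \<longleftrightarrow> marked V E s z \<and> idom E s z \<in> T"
  unfolding boundary_children_def by auto

lemma r_V: "r \<in> V" using root sV mk_basic unfolding subtree_root_def by auto

lemma r_mk: "r \<noteq> s \<Longrightarrow> marked V E s r" using root unfolding subtree_root_def by auto

lemma r_T: "r \<in> T"
  unfolding T_mem using r_V dom_refl dom_antisym[OF _ _ r_V] by auto

lemma T_V: "v \<in> T \<Longrightarrow> v \<in> V" using T_mem by auto
lemma T_D: "v \<in> T \<Longrightarrow> D r v" using T_mem by auto

lemma BC_props:
  assumes "z \<in> BC"
  shows "marked V E s z" "idom E s z \<in> T" "D r z" "z \<noteq> r" "z \<notin> T" "z \<in> V"
proof -
  show m: "marked V E s z" and i: "idom E s z \<in> T" using assms BC_mem by auto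
  show d: "D r z" using T_D[OF i] L7c[OF m] dom_trans by blast
  show ne: "z \<noteq> r" using L7b[OF m] T_D[OF i] by auto
  show "z \<in> V" using mk_basic m by auto
  show "z \<notin> T" using T_not[OF ne d dom_refl m] .
qed

lemma BC_notdom: "z \<in> BC \<Longrightarrow> v \<in> T \<Longrightarrow> \<not> D z v"
  using BC_props(1,3,4) T_not by metis

lemma dr_props:
  assumes "r \<noteq> s"
  shows "\<not> D r (idom E s r)" "idom E s r \<notin> T" "idom E s r \<notin> BC" "idom E s r \<in> V"
proof -
  show n: "\<not> D r (idom E s r)" using L7b r_mk assms by auto
  then show "idom E s r \<notin> T" using T_D by auto
  show "idom E s r \<notin> BC" using n BC_props(3) by auto
  show "idom E s r \<in> V" using mk_basic r_mk assms by auto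
qed

lemma BC_unique_aux:
  assumes z1: "z1 \<in> BC" and z2: "z2 \<in> BC" and d: "D z1 z2"
  shows "z1 = z2"
proof (rule ccontr)
  assume ne: "z1 \<noteq> z2"
  have "D z1 (idom E s z2)" using L7d BC_props(1)[OF z2] d ne by blast
  moreover have "idom E s z2 \<in> T" using BC_props(2)[OF z2] .
  ultimately show False using T_not BC_props(1,3,4)[OF z1] by metis
qed

lemma BC_unique: "z1 \<in> BC \<Longrightarrow> z2 \<in> BC \<Longrightarrow> D z1 a \<Longrightarrow> D z2 a \<Longrightarrow> a \<in> V \<Longrightarrow> z1 = z2"
  using dom_chain BC_unique_aux by metis

lemma BC_exists:
  assumes aV: "a \<in> V" and ra: "D r a" and aT: "a \<notin> T"
  shows "\<exists>z\<in>BC. D z a"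
proof -
  define M where "M = {x. marked V E s x \<and> x \<noteq> r \<and> D r x \<and> D x a}"
  define m where "m x = card {y. D y x}" for x
  obtain x1 where "x1 \<in> M" using aV ra aT unfolding T_mem M_def by auto
  then obtain x0 where x0: "x0 \<in> M" and xmin: "\<And>y. y \<in> M \<Longrightarrow> m x0 \<le> m y"
    using ex_has_least_nat[of "\<lambda>x. x \<in> M" x1 m] by blast
  have mx0: "marked V E s x0" using x0 M_def by auto
  have x0V: "x0 \<in> V" using mk_basic mx0 by auto
  have min: "x = x0" if "x \<in> M" "D x x0" for x
  proof (rule ccontr)
    assume ne: "x \<noteq> x0"
    have sub: "{y. D y x0} \<subseteq> V" using dom_V[of _ x0] x0V by blast
    have "{y. D y x} \<subset> {y. D y x0}"
    proof
      show "{y. D y x} \<subseteq> {y. D y x0}" using dom_trans[of _ x x0] that by blast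
      have "x0 \<notin> {y. D y x}" using dom_antisym[of x x0] that ne x0V by auto
      then show "{y. D y x} \<noteq> {y. D y x0}" using dom_refl by auto
    qed
    then have "m x < m x0" unfolding m_def
      using psubset_card_mono[OF finite_subset[OF sub fin]] by blast
    then show False using xmin that by force
  qed
  have "x0 \<in> BC"
    unfolding BC_mem T_mem
  proof (intro conjI mx0 allI impI)
    show "idom E s x0 \<in> V" using mk_basic mx0 by auto
    show "D r (idom E s x0)" using L7d mx0 x0 M_def by auto
    fix x assume x: "x \<noteq> r \<and> D r x \<and> D x (idom E s x0)"
    show "\<not> marked V E s x"
    proof
      assume mx: "marked V E s x"
      have "D x x0" using x L7c[OF mx0] dom_trans by blast
      moreover have "x \<noteq> x0" using x L7b[OF mx0] by auto
      moreover have "x \<in> M" using M_def mx x \<open>D x x0\<close> x0 dom_trans by auto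
      ultimately show False using min by auto
    qed
  qed
  then show ?thesis using x0 M_def by auto
qed

lemma pi_T: "a \<in> T \<Longrightarrow> pi a = a" unfolding pi_def by auto

lemma pi_BC: assumes "a \<in> V" "z \<in> BC" "D z a" shows "pi a = z"
proof -
  have aT: "a \<notin> T" using assms BC_notdom by blast
  have ra: "D r a" using assms BC_props(3) dom_trans by blast
  have "(SOME z. z \<in> BC \<and> D z a) \<in> BC \<and> D (SOME z. z \<in> BC \<and> D z a) a"
    using someI[of "\<lambda>z. z \<in> BC \<and> D z a" z] assms by auto
  then have "(SOME z. z \<in> BC \<and> D z a) = z" using BC_unique assms by blast
  then show ?thesis unfolding pi_def using aT ra by auto
qed

lemma pi_out: "\<not> D r a \<Longrightarrow> pi a = idom E s r"
  unfolding pi_def using T_D by auto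

lemma pi_cases:
  assumes "a \<in> V"
  obtains "a \<in> T" "pi a = a"
  | z where "z \<in> BC" "D z a" "pi a = z" "a \<notin> T" "D r a"
  | "\<not> D r a" "r \<noteq> s" "pi a = idom E s r" "a \<notin> T"
proof -
  consider "a \<in> T" | "a \<notin> T" "D r a" | "\<not> D r a" by blast
  then show ?thesis
  proof cases
    case 1 then show ?thesis using that pi_T by blast
  next
    case 2
    then obtain z where "z \<in> BC" "D z a" using BC_exists assms by blast
    then show ?thesis using that pi_BC assms 2 by blast
  next
    case 3
    then show ?thesis using that pi_out dom_s T_D by blast
  qed
qed

lemma pi_in_T: "a \<in> V \<Longrightarrow> pi a \<in> T \<longleftrightarrow> a \<in> T"
  by (cases a rule: pi_cases) (auto simp: BC_props dr_props)

end


lemma pe_Cons: "R \<noteq> [] \<Longrightarrow> path_edges (x # R) = insert (x, hd R) (path_edges R)"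
  by (cases R) auto

lemma pe_map: "path_edges (map f p) = (\<lambda>(a,b). (f a, f b)) ` path_edges p"
  unfolding path_edges_def by (simp add: map_tl[symmetric] zip_map_map)

lemma pe_rda: "path_edges (remdups_adj xs) \<subseteq> {(a,b). (a,b) \<in> path_edges xs \<and> a \<noteq> b}"
proof (induction xs rule: remdups_adj.induct)
  case (3 x y xs)
  show ?case
  proof (cases "x = y")
    case True then show ?thesis using 3 by auto
  next
    case False
    then have "path_edges (remdups_adj (x # y # xs)) = insert (x, y) (path_edges (remdups_adj (y # xs)))"
      using pe_Cons[of "remdups_adj (y # xs)" x] by simp
    then show ?thesis using 3 False by auto
  qed
qed auto

fun expand :: "('a \<times> 'a \<Rightarrow> 'a list) \<Rightarrow> 'a list \<Rightarrow> 'a list" where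
  "expand W [] = []"
| "expand W [x] = [x]"
| "expand W (x # y # xs) = W (x,y) @ tl (expand W (y # xs))"

lemma expand_props:
  "P \<noteq> [] \<Longrightarrow> (\<forall>e \<in> path_edges P. W e \<noteq> [] \<and> hd (W e) = fst e \<and> last (W e) = snd e) \<Longrightarrow>
   expand W P \<noteq> [] \<and> hd (expand W P) = hd P \<and> last (expand W P) = last P \<and>
   path_edges (expand W P) \<subseteq> (\<Union>e\<in>path_edges P. path_edges (W e))"
proof (induction W P rule: expand.induct)
  case (3 W x y xs)
  define R where "R = expand W (y # xs)"
  have IH: "R \<noteq> [] \<and> hd R = y \<and> last R = last (y#xs) \<and>
     path_edges R \<subseteq> (\<Union>e\<in>path_edges (y#xs). path_edges (W e))"
    using 3 unfolding R_def by auto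
  have w: "W (x,y) \<noteq> []" "hd (W (x,y)) = x" "last (W (x,y)) = y" using 3(3) by auto
  have pe: "path_edges (W (x,y) @ tl R) = path_edges (W (x,y)) \<union> path_edges R"
    using pe_glue IH w by metis
  have l: "last (W (x,y) @ tl R) = last (x # y # xs)"
  proof (cases "tl R = []")
    case True
    then have "R = [y]" using IH by (cases R) auto
    then show ?thesis using IH w True by auto
  next
    case False then show ?thesis using IH by (cases R) auto
  qed
  have ex: "expand W (x # y # xs) = W (x,y) @ tl R" unfolding R_def by simp
  show ?case unfolding ex using IH w pe l by auto
qed auto

context sgr begin

abbreviation AE where "AE \<equiv> aux_edges V E s r"

lemma aux_I1: "z \<in> BC \<Longrightarrow> (idom E s z, z) \<in> AE" unfolding aux_edges_def by auto
lemma aux_I2: "r \<noteq> s \<Longrightarrow> (idom E s r, r) \<in> AE" unfolding aux_edges_def by auto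
lemma aux_I3: "(u,v) \<in> E \<Longrightarrow> u \<in> T \<Longrightarrow> v \<in> T \<Longrightarrow> (u,v) \<in> AE" unfolding aux_edges_def by auto
lemma aux_I4: "(u,v) \<in> E \<Longrightarrow> u \<in> T \<Longrightarrow> \<not> D r v \<Longrightarrow> (u, idom E s r) \<in> AE"
  unfolding aux_edges_def by blast
lemma aux_I5: "(u,v) \<in> E \<Longrightarrow> v \<in> T \<Longrightarrow> z \<in> BC \<Longrightarrow> D z u \<Longrightarrow> (z,v) \<in> AE"
  unfolding aux_edges_def by blast
lemma aux_I6: "(u,v) \<in> E \<Longrightarrow> z \<in> BC \<Longrightarrow> D z u \<Longrightarrow> \<not> D r v \<Longrightarrow> (z, idom E s r) \<in> AE"
  unfolding aux_edges_def by blast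

lemma aux_E:
  assumes "(c,d) \<in> AE"
  obtains (c1) "d \<in> BC" "c = idom E s d"
  | (c2) "r \<noteq> s" "c = idom E s r" "d = r"
  | (c3) "(c,d) \<in> E" "c \<in> T" "d \<in> T"
  | (c4) v where "(c,v) \<in> E" "c \<in> T" "\<not> D r v" "d = idom E s r" "r \<noteq> s"
  | (c5) u where "(u,d) \<in> E" "d \<in> T" "c \<in> BC" "D c u"
  | (c6) u v where "(u,v) \<in> E" "c \<in> BC" "D c u" "\<not> D r v" "d = idom E s r" "r \<noteq> s"
proof -
  have "r \<noteq> s" if "\<not> D r v" for v using that dom_s by auto
  then show ?thesis using assms that unfolding aux_edges_def
    by (auto split: if_splits)
qed

lemma aux_in_BC: "(a,z) \<in> AE \<Longrightarrow> z \<in> BC \<Longrightarrow> a = idom E s z"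
  by (erule aux_E) (use BC_props r_T dr_props in auto)

lemma aux_out_dr: "r \<noteq> s \<Longrightarrow> (idom E s r, b) \<in> AE \<Longrightarrow> b = r"
  by (erule aux_E) (use BC_props dr_props in auto)

lemma aux_ends: "(c,d) \<in> AE \<Longrightarrow>
   (c \<in> T \<or> c \<in> BC \<or> (r \<noteq> s \<and> c = idom E s r)) \<and> (d \<in> T \<or> d \<in> BC \<or> (r \<noteq> s \<and> d = idom E s r))"
  by (erule aux_E) (use BC_props r_T in auto)

definition keyA where "keyA x = (if x \<in> BC then (idom E s x, x) else (idom E s r, r))"

lemma hom:
  assumes ab: "(a,b) \<in> E" and ne: "pi a \<noteq> pi b"
  shows "(pi a, pi b) \<in> AE"
proof -
  have aV: "a \<in> V" and bV: "b \<in> V" using ab EV by auto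
  show ?thesis
  proof (cases rule: pi_cases[OF aV])
    case 1
    then show ?thesis
    proof (cases rule: pi_cases[OF bV])
      case 1 then show ?thesis using aux_I3 ab \<open>a \<in> T\<close> \<open>pi a = a\<close> by auto
    next
      case (2 z)
      have "\<not> D z a" using BC_notdom 2 \<open>a \<in> T\<close> by auto
      then have "b = z" using L5 ab 2 by auto
      then have "a = idom E s z" using L6 ab BC_props(1) 2 \<open>\<not> D z a\<close> by auto
      then show ?thesis using aux_I1 2 \<open>pi a = a\<close> by auto
    next
      case 3 then show ?thesis using aux_I4 ab \<open>a \<in> T\<close> \<open>pi a = a\<close> by auto
    qed
  next
    case (2 z)
    then show ?thesis
    proof (cases rule: pi_cases[OF bV])
      case 1 then show ?thesis using aux_I5 ab 2 by auto
    next
      case (2 z')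
      show ?thesis
      proof (cases "D z' a")
        case True
        then have "z = z'" using BC_unique 2 \<open>z \<in> BC\<close> \<open>D z a\<close> aV by blast
        then show ?thesis using ne 2 \<open>pi a = z\<close> by auto
      next
        case False
        then have "b = z'" using L5 ab 2 by auto
        then have "a = idom E s z'" using L6 ab BC_props(1) 2 False by auto
        then show ?thesis using BC_props(2) 2 \<open>a \<notin> T\<close> by auto
      qed
    next
      case 3 then show ?thesis using aux_I6 ab 2 by auto
    qed
  next
    case 3
    then show ?thesis
    proof (cases rule: pi_cases[OF bV])
      case 1
      then have "b = r" using L5 ab 3 T_D by auto
      then have "a = idom E s r" using L6 ab r_mk 3 by auto
      then show ?thesis using aux_I2 3 1 \<open>b = r\<close> by auto
    next
      case (2 z')
      then have "b = r" using L5 ab 3 by auto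
      then show ?thesis using r_T 2 by auto
    next
      case 3 then show ?thesis using ne \<open>pi a = idom E s r\<close> by auto
    qed
  qed
qed

lemma keyG:
  assumes p: "dpath E p v w" and vT: "v \<in> T" and wT: "w \<in> T" and y: "y \<in> set p"
    and yT: "pi y \<notin> T"
  shows "keyA (pi y) \<in> path_edges p"
proof -
  have yV: "y \<in> V" using dpath_V p T_V vT y by blast
  have pE: "path_edges p \<subseteq> E" "p \<noteq> []" "hd p = v" "last p = w" using p unfolding dpath_def by auto
  show ?thesis
  proof (cases rule: pi_cases[OF yV])
    case 1 then show ?thesis using yT by auto
  next
    case (2 z)
    have "\<not> D z (hd p)" using BC_notdom 2 vT pE by auto
    then obtain a b where e: "(a,b) \<in> path_edges p" "\<not> D z a" "D z b"
      using cross1[of p "D z" y] pE y 2 by auto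
    then have "b = z" using L5 pE by auto
    then have "a = idom E s z" using L6 BC_props(1) 2 e pE by auto
    then show ?thesis using e \<open>b = z\<close> 2 keyA_def by auto
  next
    case 3
    have "D r (last p)" using T_D wT pE by auto
    then obtain a b where e: "(a,b) \<in> path_edges p" "\<not> D r a" "D r b"
      using cross2[of p "D r" y] pE y 3 by auto
    then have "b = r" using L5 pE by auto
    then have "a = idom E s r" using L6 r_mk 3 e pE by auto
    then show ?thesis using e \<open>b = r\<close> 3 keyA_def dr_props by auto
  qed
qed

lemma keyAux:
  assumes P: "dpath AE P v w" and vT: "v \<in> T" and wT: "w \<in> T" and x: "x \<in> set P"
    and xT: "x \<notin> T"
  shows "keyA x \<in> path_edges P"
proof -
  have PE: "path_edges P \<subseteq> AE" "P \<noteq> []" "hd P = v" "last P = w" using P unfolding dpath_def by auto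
  have "x \<in> snd ` path_edges P" using set_hd_snd[of P] PE x xT vT by auto
  then obtain a where a: "(a,x) \<in> path_edges P" by force
  then have aAE: "(a,x) \<in> AE" using PE by auto
  show ?thesis
  proof (cases "x \<in> BC")
    case True
    then show ?thesis using aux_in_BC aAE a keyA_def by auto
  next
    case False
    then have x': "r \<noteq> s" "x = idom E s r" using aux_ends[OF aAE] xT by auto
    have "x \<in> fst ` path_edges P" using set_last_fst[of P] PE x xT wT by auto
    then obtain b where b: "(x,b) \<in> path_edges P" by force
    then have "b = r" using aux_out_dr x' PE by auto
    then show ?thesis using b x' False keyA_def by auto
  qed
qed

lemma proj:
  assumes p: "dpath E p v w" and vT: "v \<in> T" and wT: "w \<in> T"
  shows "\<exists>P. dpath AE P v w \<and> (\<forall>(c,d)\<in>path_edges P. \<exists>a b. (a,b) \<in> path_edges p \<and> c = pi a \<and> d = pi b)"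
proof -
  define p' where "p' = remdups_adj (map pi p)"
  have pE: "path_edges p \<subseteq> E" "p \<noteq> []" "hd p = v" "last p = w" using p unfolding dpath_def by auto
  have e: "\<exists>a b. (a,b) \<in> path_edges p \<and> c = pi a \<and> d = pi b \<and> c \<noteq> d"
    if "(c,d) \<in> path_edges p'" for c d
  proof -
    have "(c,d) \<in> (\<lambda>(a,b). (pi a, pi b)) ` path_edges p \<and> c \<noteq> d"
      using that pe_rda[of "map pi p"] pe_map[of pi p] unfolding p'_def by auto
    then obtain f where "f \<in> path_edges p" "(c,d) = (\<lambda>(a,b). (pi a, pi b)) f" "c \<noteq> d" by blast
    then show ?thesis by (cases f) auto
  qed
  have "walk AE p' v w"
    unfolding walk_def
  proof (intro conjI)
    show "p' \<noteq> []" using pE p'_def by simp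
    show "hd p' = v" using pE p'_def pi_T vT by (simp add: hd_map)
    show "last p' = w" using pE p'_def pi_T wT by (simp add: last_map)
    show "path_edges p' \<subseteq> AE"
    proof
      fix f assume "f \<in> path_edges p'"
      then obtain c d where f: "f = (c,d)" "(c,d) \<in> path_edges p'" by (cases f) auto
      then obtain a b where "(a,b) \<in> path_edges p" "c = pi a" "d = pi b" "c \<noteq> d" using e by blast
      then show "f \<in> AE" using hom pE f by auto
    qed
  qed
  then obtain P where "dpath AE P v w" "path_edges P \<subseteq> path_edges p'" using shorten by metis
  then show ?thesis using e by blast
qed

lemma fwd:
  assumes vT: "v \<in> T" and wT: "w \<in> T" and t: "two_edge_paths E v w"
  shows "two_edge_paths AE v w"
proof -
  obtain p q where pq: "dpath E p v w" "dpath E q v w" "path_edges p \<inter> path_edges q = {}"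
    using t two_edge_paths_def by metis
  obtain P1 where P1: "dpath AE P1 v w"
    "\<forall>(c,d)\<in>path_edges P1. \<exists>a b. (a,b) \<in> path_edges p \<and> c = pi a \<and> d = pi b"
    using proj[OF pq(1) vT wT] by blast
  obtain P2 where P2: "dpath AE P2 v w"
    "\<forall>(c,d)\<in>path_edges P2. \<exists>a b. (a,b) \<in> path_edges q \<and> c = pi a \<and> d = pi b"
    using proj[OF pq(2) vT wT] by blast
  have pV: "set p \<subseteq> V" "set q \<subseteq> V" using dpath_V[OF pq(1)] dpath_V[OF pq(2)] T_V[OF vT] by auto
  have "path_edges P1 \<inter> path_edges P2 = {}"
  proof (rule ccontr)
    assume "path_edges P1 \<inter> path_edges P2 \<noteq> {}"
    then obtain c d where cd: "(c,d) \<in> path_edges P1" "(c,d) \<in> path_edges P2" by auto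
    obtain a1 b1 where 1: "(a1,b1) \<in> path_edges p" "c = pi a1" "d = pi b1" using P1 cd by blast
    obtain a2 b2 where 2: "(a2,b2) \<in> path_edges q" "c = pi a2" "d = pi b2" using P2 cd by blast
    have in1: "a1 \<in> set p" "b1 \<in> set p" using pe_set[OF 1(1)] tl_subset[of p] by auto
    have in2: "a2 \<in> set q" "b2 \<in> set q" using pe_set[OF 2(1)] tl_subset[of q] by auto
    show False
    proof (cases "c \<in> T \<and> d \<in> T")
      case True
      have V4: "a1 \<in> V" "b1 \<in> V" "a2 \<in> V" "b2 \<in> V" using in1 in2 pV by auto
      have "a1 \<in> T" "b1 \<in> T" "a2 \<in> T" "b2 \<in> T"
        using pi_in_T[OF V4(1)] pi_in_T[OF V4(2)] pi_in_T[OF V4(3)] pi_in_T[OF V4(4)] 1 2 True by auto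
      then have "pi a1 = a1" "pi b1 = b1" "pi a2 = a2" "pi b2 = b2" using pi_T by auto
      then have "(c,d) \<in> path_edges p" "(c,d) \<in> path_edges q" using 1 2 by auto
      then show False using pq(3) by blast
    next
      case False
      then have "c \<notin> T \<or> d \<notin> T" by auto
      then show False
      proof
        assume "c \<notin> T"
        then have "keyA c \<in> path_edges p" "keyA c \<in> path_edges q"
          using keyG[OF pq(1) vT wT in1(1)] keyG[OF pq(2) vT wT in2(1)] 1 2 by auto
        then show False using pq(3) by blast
      next
        assume "d \<notin> T"
        then have "keyA d \<in> path_edges p" "keyA d \<in> path_edges q"
          using keyG[OF pq(1) vT wT in1(2)] keyG[OF pq(2) vT wT in2(2)] 1 2 by auto
        then show False using pq(3) by blast
      qed
    qed
  qed
  then show ?thesis unfolding two_edge_paths_def using P1(1) P2(1) by blast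
qed

end


context sgr begin

lemma down_walk:
  assumes z: "z \<in> BC" and uV: "u \<in> V" and zu: "D z u"
  shows "\<exists>R. R \<noteq> [] \<and> hd R = z \<and> last R = u \<and> path_edges R \<subseteq> E \<and> (\<forall>y\<in>set R. pi y = z)"
proof -
  obtain p where p: "dpath E p s u" using reach[OF sV uV] by blast
  have pd: "p \<noteq> []" "hd p = s" "last p = u" "distinct p" "path_edges p \<subseteq> E"
    using p unfolding dpath_def by auto
  have pV: "set p \<subseteq> V" using dpath_V[OF p sV] .
  have "z \<in> set p" using zu p unfolding dominates_def by blast
  then obtain p1 p2 where pp: "p = p1 @ z # p2" by (meson split_list)
  define R where "R = z # p2"
  have peR: "path_edges R \<subseteq> path_edges p" using pe_suffix pp R_def by metis
  have lastR: "last R = u" using pd pp R_def by (cases p2) auto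
  have zn: "z \<notin> set p2" using pd pp by auto
  have allD: "D z y" if y: "y \<in> set R" for y
  proof (rule ccontr)
    assume ny: "\<not> D z y"
    have "D z (last R)" using lastR zu by simp
    then obtain a b where ab: "(a,b) \<in> path_edges R" "\<not> D z a" "D z b"
      using cross2[of R "D z" y] R_def y ny by auto
    have "(a,b) \<in> E" using ab peR pd by auto
    then have "b = z" using L5 ab by auto
    moreover have "b \<in> set p2" using pe_set[OF ab(1)] R_def by auto
    ultimately show False using zn by auto
  qed
  have "\<forall>y\<in>set R. pi y = z"
  proof
    fix y assume y: "y \<in> set R"
    then have "y \<in> V" using pV pp R_def by auto
    then show "pi y = z" using pi_BC z allD y by auto
  qed
  moreover have "path_edges R \<subseteq> E" using peR pd by auto
  ultimately show ?thesis using lastR by (intro exI[of _ R]) (simp add: R_def)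
qed

lemma up_walk:
  assumes rs: "r \<noteq> s" and xV: "x \<in> V" and nx: "\<not> D r x"
  shows "\<exists>Q. Q \<noteq> [] \<and> hd Q = x \<and> last Q = idom E s r \<and> path_edges Q \<subseteq> E \<and>
    (\<forall>y\<in>set Q. pi y = idom E s r)"
proof -
  obtain q where q: "dpath E q x (idom E s r)" using reach[OF xV dr_props(4)[OF rs]] by blast
  have qd: "q \<noteq> []" "hd q = x" "last q = idom E s r" "path_edges q \<subseteq> E"
    using q unfolding dpath_def by auto
  have "\<exists>Q. Q \<noteq> [] \<and> hd Q = x \<and> last Q = idom E s r \<and> path_edges Q \<subseteq> E \<and> (\<forall>y\<in>set Q. \<not> D r y)"
  proof (cases "\<exists>y\<in>set q. D r y")
    case False then show ?thesis using qd by blast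
  next
    case True
    then obtain q1 y q2 where qq: "q = q1 @ y # q2" "D r y" "\<forall>y'\<in>set q1. \<not> D r y'"
      using split_list_first_prop[of q "D r"] by blast
    have q1ne: "q1 \<noteq> []" using qq qd nx by (cases q1) auto
    have pe1: "path_edges q1 \<subseteq> path_edges q" and e: "(last q1, y) \<in> path_edges q"
      using qq(1) q1ne pe_append[of q1 "y # q2"] by auto
    have "(last q1, y) \<in> E" using e qd by auto
    moreover have "\<not> D r (last q1)" using qq q1ne by auto
    ultimately have "y = r" "last q1 = idom E s r"
      using L5[of "last q1" y r] L6[of r "last q1"] r_mk[OF rs] qq by auto
    moreover have "hd q1 = x" using qq qd q1ne by auto
    ultimately show ?thesis using q1ne pe1 qd qq by blast
  qed
  then obtain Q where Q: "Q \<noteq> []" "hd Q = x" "last Q = idom E s r" "path_edges Q \<subseteq> E" "\<forall>y\<in>set Q. \<not> D r y"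
    by blast
  have "\<forall>y\<in>set Q. pi y = idom E s r" using Q(5) pi_out by auto
  then show ?thesis using Q by blast
qed

lemma pe_all: "\<forall>y\<in>set Q. f y = d \<Longrightarrow> (a,b) \<in> path_edges Q \<Longrightarrow> f a = d \<and> f b = d"
  using pe_set[of a b Q] tl_subset[of Q] by auto

definition Good where
  "Good e W \<longleftrightarrow> W \<noteq> [] \<and> hd W = fst e \<and> last W = snd e \<and> path_edges W \<subseteq> E \<and>
    (\<forall>(a,b)\<in>path_edges W. (pi a, pi b) = e \<or> (pi a = pi b \<and> pi a \<notin> T \<and> (pi a = fst e \<or> pi a = snd e)))"

lemma G1: assumes c1: "d \<in> BC" "c = idom E s d" shows "\<exists>W. Good (c,d) W"
proof -
  have "pi c = c" using pi_T BC_props(2) c1 by auto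
  moreover have "pi d = d" using pi_BC[of d d] BC_props(6) c1 dom_refl by auto
  moreover have "(c,d) \<in> E" using mk_basic BC_props(1) c1 by auto
  ultimately have "Good (c,d) [c,d]" unfolding Good_def by auto
  then show ?thesis by blast
qed

lemma G2: assumes c2: "r \<noteq> s" "c = idom E s r" "d = r" shows "\<exists>W. Good (c,d) W"
proof -
  have "pi c = c" using pi_out dr_props c2 by auto
  moreover have "pi d = d" using pi_T r_T c2 by auto
  moreover have "(c,d) \<in> E" using mk_basic r_mk c2 by auto
  ultimately have "Good (c,d) [c,d]" unfolding Good_def by auto
  then show ?thesis by blast
qed

lemma G3: assumes c3: "(c,d) \<in> E" "c \<in> T" "d \<in> T" shows "\<exists>W. Good (c,d) W"
proof -
  have "Good (c,d) [c,d]" unfolding Good_def using pi_T c3 by auto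
  then show ?thesis by blast
qed

lemma G4: assumes c4: "(c,v) \<in> E" "c \<in> T" "\<not> D r v" "d = idom E s r" "r \<noteq> s"
  shows "\<exists>W. Good (c,d) W"
proof -
  have vV: "v \<in> V" using c4 EV by auto
  obtain Q where Q: "Q \<noteq> []" "hd Q = v" "last Q = d" "path_edges Q \<subseteq> E"
    "\<forall>y\<in>set Q. pi y = d" using up_walk[OF c4(5) vV c4(3)] c4(4) by blast
  have pe: "path_edges (c # Q) = insert (c, v) (path_edges Q)" using pe_Cons[OF Q(1)] Q(2) by simp
  have pc: "pi c = c" using pi_T c4 by auto
  have pv: "pi v = d" using Q(1,2,5) by auto
  have dT: "d \<notin> T" using dr_props c4 by auto
  have QQ: "\<forall>(a,b)\<in>path_edges Q. pi a = d \<and> pi b = d"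
    using pe_all[OF Q(5)] by blast
  have "Good (c,d) (c # Q)" unfolding Good_def
  proof (intro conjI)
    show "path_edges (c # Q) \<subseteq> E" using pe Q(4) c4(1) by auto
    show "\<forall>(a,b)\<in>path_edges (c # Q). (pi a, pi b) = (c,d) \<or> (pi a = pi b \<and> pi a \<notin> T \<and> (pi a = fst (c,d) \<or> pi a = snd (c,d)))"
      unfolding pe using QQ pc pv dT by auto
  qed (use Q in auto)
  then show ?thesis by blast
qed

lemma G5: assumes c5: "(u,d) \<in> E" "d \<in> T" "c \<in> BC" "D c u"
  shows "\<exists>W. Good (c,d) W"
proof -
  have uV: "u \<in> V" using c5 EV by auto
  obtain R where R: "R \<noteq> []" "hd R = c" "last R = u" "path_edges R \<subseteq> E"
    "\<forall>y\<in>set R. pi y = c" using down_walk[OF c5(3) uV c5(4)] by blast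
  have pe: "path_edges (R @ [d]) = insert (u, d) (path_edges R)" using pe_append[of R "[d]"] R by auto
  have pd: "pi d = d" using pi_T c5 by auto
  have cT: "c \<notin> T" using BC_props c5 by auto
  have pu: "pi u = c" using R(3,5) R(1) by auto
  have RR: "\<forall>(a,b)\<in>path_edges R. pi a = c \<and> pi b = c"
    using pe_all[OF R(5)] by blast
  have "Good (c,d) (R @ [d])" unfolding Good_def
  proof (intro conjI)
    show "path_edges (R @ [d]) \<subseteq> E" using pe R(4) c5(1) by auto
    show "\<forall>(a,b)\<in>path_edges (R @ [d]). (pi a, pi b) = (c,d) \<or> (pi a = pi b \<and> pi a \<notin> T \<and> (pi a = fst (c,d) \<or> pi a = snd (c,d)))"
      unfolding pe using RR pu pd cT by auto
  qed (use R in auto)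
  then show ?thesis by blast
qed

lemma G6: assumes c6: "(u,v) \<in> E" "c \<in> BC" "D c u" "\<not> D r v" "d = idom E s r" "r \<noteq> s"
  shows "\<exists>W. Good (c,d) W"
proof -
  have uV: "u \<in> V" and vV: "v \<in> V" using c6 EV by auto
  obtain R where R: "R \<noteq> []" "hd R = c" "last R = u" "path_edges R \<subseteq> E"
    "\<forall>y\<in>set R. pi y = c" using down_walk[OF c6(2) uV c6(3)] by blast
  obtain Q where Q: "Q \<noteq> []" "hd Q = v" "last Q = d" "path_edges Q \<subseteq> E"
    "\<forall>y\<in>set Q. pi y = d" using up_walk[OF c6(6) vV c6(4)] c6(5) by blast
  have pe: "path_edges (R @ Q) = insert (u, v) (path_edges R \<union> path_edges Q)"
    using pe_append[of R Q] R Q by auto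
  have cT: "c \<notin> T" using BC_props c6 by auto
  have dT: "d \<notin> T" using dr_props c6 by auto
  have pu: "pi u = c" using R(3,5) R(1) by auto
  have pv: "pi v = d" using Q(2,5) Q(1) by auto
  have RR: "\<forall>(a,b)\<in>path_edges R. pi a = c \<and> pi b = c"
    using pe_all[OF R(5)] by blast
  have QQ: "\<forall>(a,b)\<in>path_edges Q. pi a = d \<and> pi b = d"
    using pe_all[OF Q(5)] by blast
  have "Good (c,d) (R @ Q)" unfolding Good_def
  proof (intro conjI)
    show "path_edges (R @ Q) \<subseteq> E" using pe R(4) Q(4) c6(1) by auto
    show "\<forall>(a,b)\<in>path_edges (R @ Q). (pi a, pi b) = (c,d) \<or> (pi a = pi b \<and> pi a \<notin> T \<and> (pi a = fst (c,d) \<or> pi a = snd (c,d)))"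
      unfolding pe using RR QQ pu pv cT dT by auto
  qed (use R Q in auto)
  then show ?thesis by blast
qed

lemma exGood: assumes e: "(c,d) \<in> AE" shows "\<exists>W. Good (c,d) W"
  using e
proof (cases rule: aux_E)
  case c1 then show ?thesis by (rule G1)
next
  case c2 then show ?thesis by (rule G2)
next
  case c3 then show ?thesis by (rule G3)
next
  case c4 then show ?thesis by (rule G4)
next
  case c5 then show ?thesis by (rule G5)
next
  case c6 then show ?thesis by (rule G6)
qed

end


context sgr begin

definition WW where "WW e = (SOME W. Good e W)"

lemma WW_good: "e \<in> AE \<Longrightarrow> Good e (WW e)"
  unfolding WW_def using exGood by (cases e) (metis someI_ex)

lemma Good_edge: "Good e W \<Longrightarrow> (a,b) \<in> path_edges W \<Longrightarrow>
   (pi a, pi b) = e \<or> (pi a = pi b \<and> pi a \<notin> T \<and> (pi a = fst e \<or> pi a = snd e))"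
  unfolding Good_def by fast

lemma Good_basic: "Good e W \<Longrightarrow> W \<noteq> [] \<and> hd W = fst e \<and> last W = snd e \<and> path_edges W \<subseteq> E"
  unfolding Good_def by fast

lemma lift:
  assumes P: "dpath AE P v w"
  shows "\<exists>q. dpath E q v w \<and> path_edges q \<subseteq> (\<Union>e\<in>path_edges P. path_edges (WW e))"
proof -
  have Pd: "P \<noteq> []" "hd P = v" "last P = w" "path_edges P \<subseteq> AE" using P unfolding dpath_def by auto
  have g: "\<forall>e\<in>path_edges P. Good e (WW e)" using WW_good Pd by auto
  then have "\<forall>e\<in>path_edges P. WW e \<noteq> [] \<and> hd (WW e) = fst e \<and> last (WW e) = snd e"
    using Good_basic by blast
  from expand_props[OF Pd(1) this]
  have X: "expand WW P \<noteq> []" "hd (expand WW P) = v" "last (expand WW P) = w"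
    "path_edges (expand WW P) \<subseteq> (\<Union>e\<in>path_edges P. path_edges (WW e))" using Pd by auto
  have "(\<Union>e\<in>path_edges P. path_edges (WW e)) \<subseteq> E" using g Good_basic by blast
  then have "walk E (expand WW P) v w" using X unfolding walk_def by auto
  then obtain q where "dpath E q v w" "path_edges q \<subseteq> path_edges (expand WW P)"
    using shorten by metis
  then show ?thesis using X by blast
qed

lemma bwd:
  assumes vT: "v \<in> T" and wT: "w \<in> T" and t: "two_edge_paths AE v w"
  shows "two_edge_paths E v w"
proof -
  obtain P1 P2 where PP: "dpath AE P1 v w" "dpath AE P2 v w" "path_edges P1 \<inter> path_edges P2 = {}"
    using t two_edge_paths_def by metis
  obtain q1 where q1: "dpath E q1 v w" "path_edges q1 \<subseteq> (\<Union>e\<in>path_edges P1. path_edges (WW e))"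
    using lift[OF PP(1)] by blast
  obtain q2 where q2: "dpath E q2 v w" "path_edges q2 \<subseteq> (\<Union>e\<in>path_edges P2. path_edges (WW e))"
    using lift[OF PP(2)] by blast
  have "path_edges q1 \<inter> path_edges q2 = {}"
  proof (rule ccontr)
    assume "path_edges q1 \<inter> path_edges q2 \<noteq> {}"
    then obtain a b where ab: "(a,b) \<in> path_edges q1" "(a,b) \<in> path_edges q2" by auto
    obtain e1 where e1: "e1 \<in> path_edges P1" "(a,b) \<in> path_edges (WW e1)" using ab q1 by blast
    obtain e2 where e2: "e2 \<in> path_edges P2" "(a,b) \<in> path_edges (WW e2)" using ab q2 by blast
    have "e1 \<in> AE" using e1(1) PP(1) unfolding dpath_def by auto
    then have g1: "Good e1 (WW e1)" by (rule WW_good)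
    have "e2 \<in> AE" using e2(1) PP(2) unfolding dpath_def by auto
    then have g2: "Good e2 (WW e2)" by (rule WW_good)
    have o1: "(pi a, pi b) = e1 \<or> (pi a = pi b \<and> pi a \<notin> T \<and> (pi a = fst e1 \<or> pi a = snd e1))"
      using Good_edge[OF g1 e1(2)] .
    have o2: "(pi a, pi b) = e2 \<or> (pi a = pi b \<and> pi a \<notin> T \<and> (pi a = fst e2 \<or> pi a = snd e2))"
      using Good_edge[OF g2 e2(2)] .
    have d1: "fst e1 \<noteq> snd e1" using pe_distinct[of P1 "fst e1" "snd e1"] e1 PP(1) unfolding dpath_def by auto
    have d2: "fst e2 \<noteq> snd e2" using pe_distinct[of P2 "fst e2" "snd e2"] e2 PP(2) unfolding dpath_def by auto
    have s1: "fst e1 \<in> set P1" "snd e1 \<in> set P1" using pe_set[of "fst e1" "snd e1" P1] e1 tl_subset[of P1] by auto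
    have s2: "fst e2 \<in> set P2" "snd e2 \<in> set P2" using pe_set[of "fst e2" "snd e2" P2] e2 tl_subset[of P2] by auto
    show False
    proof (cases "(pi a, pi b) = e1")
      case True
      then have "pi a \<noteq> pi b" using d1 by auto
      then have "e2 = e1" using o2 True by auto
      then show False using e1 e2 PP(3) by blast
    next
      case False
      then have x: "pi a \<notin> T" "pi a \<in> set P1" using o1 s1 by auto
      have "pi a \<noteq> pi b \<Longrightarrow> False" using o1 False by auto
      then have "(pi a, pi b) \<noteq> e2" using d2 by auto
      then have "pi a \<in> set P2" using o2 s2 by auto
      then have "keyA (pi a) \<in> path_edges P1" "keyA (pi a) \<in> path_edges P2"
        using keyAux[OF PP(1) vT wT x(2) x(1)] keyAux[OF PP(2) vT wT _ x(1)] by auto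
      then show False using PP(3) by blast
    qed
  qed
  then show ?thesis unfolding two_edge_paths_def using q1(1) q2(1) by blast
qed

lemma w_in_T:
  assumes vT: "v \<in> T" and wV: "w \<in> V" and t1: "two_edge_paths E v w" and t2: "two_edge_paths E w v"
  shows "w \<in> T"
proof (rule ccontr)
  assume wT: "w \<notin> T"
  show False
  proof (cases "D r w")
    case True
    then obtain x where x: "x \<noteq> r" "D r x" "D x w" "marked V E s x"
      using wT wV unfolding T_mem by blast
    have "\<not> D x v" using T_not[OF x(1,2) _ x(4)] vT by blast
    obtain p q where pq: "dpath E p v w" "dpath E q v w" "path_edges p \<inter> path_edges q = {}"
      using t1 two_edge_paths_def by metis
    have "(idom E s x, x) \<in> path_edges p" "(idom E s x, x) \<in> path_edges q"
      using sep[OF x(4) x(3) \<open>\<not> D x v\<close>] pq by auto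
    then show False using pq(3) by blast
  next
    case False
    then have rs: "r \<noteq> s" using dom_s by auto
    have rv: "D r v" using T_D vT by auto
    obtain p q where pq: "dpath E p w v" "dpath E q w v" "path_edges p \<inter> path_edges q = {}"
      using t2 two_edge_paths_def by metis
    have "(idom E s r, r) \<in> path_edges p" "(idom E s r, r) \<in> path_edges q"
      using sep[OF r_mk[OF rs] rv False] pq by auto
    then show False using pq(3) by blast
  qed
qed

end

theorem mainTheorem10:
  fixes V :: "'a set" and E :: "('a \<times> 'a) set" and s v w :: 'a
  assumes "finite V"
    and "E \<subseteq> V \<times> V"
    and "strongly_connected V E"
    and "s \<in> V" and "v \<in> V" and "w \<in> V" and "v \<noteq> w"
  shows "two_edge_equiv E v w \<longleftrightarrow>
    (\<exists>r. subtree_root V E s r \<and> v \<in> subtree V E s r \<and> w \<in> subtree V E s r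
         \<and> two_edge_equiv (aux_edges V E s r) v w)"
proof -
  interpret sg V E s using assms by unfold_locales
  show ?thesis
  proof
    assume "two_edge_equiv E v w"
    then have t1: "two_edge_paths E v w" and t2: "two_edge_paths E w v"
      using assms(7) unfolding two_edge_equiv_def by auto
    obtain r where r: "subtree_root V E s r" "v \<in> subtree V E s r"
      using root_exists assms(5) by blast
    interpret sgr V E s r using r(1) by unfold_locales
    have wT: "w \<in> subtree V E s r" using w_in_T r(2) assms(6) t1 t2 by blast
    have "two_edge_paths (aux_edges V E s r) v w" using fwd r(2) wT t1 by blast
    moreover have "two_edge_paths (aux_edges V E s r) w v" using fwd r(2) wT t2 by blast
    ultimately show "\<exists>r. subtree_root V E s r \<and> v \<in> subtree V E s r \<and> w \<in> subtree V E s r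
         \<and> two_edge_equiv (aux_edges V E s r) v w"
      using r wT unfolding two_edge_equiv_def by blast
  next
    assume "\<exists>r. subtree_root V E s r \<and> v \<in> subtree V E s r \<and> w \<in> subtree V E s r
         \<and> two_edge_equiv (aux_edges V E s r) v w"
    then obtain r where r: "subtree_root V E s r" "v \<in> subtree V E s r" "w \<in> subtree V E s r"
      "two_edge_equiv (aux_edges V E s r) v w" by blast
    interpret sgr V E s r using r(1) by unfold_locales
    have t1: "two_edge_paths (aux_edges V E s r) v w" and t2: "two_edge_paths (aux_edges V E s r) w v"
      using r(4) assms(7) unfolding two_edge_equiv_def by auto
    have "two_edge_paths E v w" using bwd r(2,3) t1 by blast
    moreover have "two_edge_paths E w v" using bwd r(2,3) t2 by blast
    ultimately show "two_edge_equiv E v w" unfolding two_edge_equiv_def by blast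
  qed
qed


end
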